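(* Let $(X,\Sigma,\mu,T)$ be an ergodic measure theoretic dynamical system. Then for any $A,B\in\Sigma$ and $\varepsilon>0$, the set $$F=\left\{k\in\mathbb{N}:\mu\left(A\cap T^{-k}(B)\right)>\mu(A)\mu(B)-\varepsilon\right\}$$ is relatively dense in $\mathbb{N}=\{1,2,3,\dots\}$.
   Context: A measure theoretic dynamical system $(X,\Sigma,\mu,T)$ consists of a probability space $(X,\Sigma,\mu)$ and a map $T:X\to X$ such that $T^{-1}(S)\in\Sigma$ and $\mu(T^{-1}(S))\le\mu(S)$ for all $S\in\Sigma$. It is called ergodic if the fixed points of the linear operator $U:L^2(\mu)\to L^2(\mu)$, $f\mapsto f\circ T$, form a one-dimensional subspace of $L^2(\mu)$. A set $E\subseteq\mathbb{N}$ is relatively dense in $\mathbb{N}$ if there exists $n\in\mathbb{N}$ such that $E\cap\{j,j+1,\dots,j+n-1\}\neq\emptyset$ for every $j\in\mathbb{N}$. *)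

theory Defs
  imports "HOL-Probability.Probability"
begin

definition mtds :: "'a measure \<Rightarrow> ('a \<Rightarrow> 'a) \<Rightarrow> bool" where
  "mtds M T \<longleftrightarrow> prob_space M \<and> T \<in> M \<rightarrow>\<^sub>M M \<and>
     (\<forall>S\<in>sets M. measure M (T -` S \<inter> space M) \<le> measure M S)"

definition L2 :: "'a measure \<Rightarrow> ('a \<Rightarrow> complex) set" where
  "L2 M = {f. f \<in> borel_measurable M \<and> integrable M (\<lambda>x. (norm (f x))\<^sup>2)}"

text \<open>f is a fixed point of U : f \<mapsto> f \<circ> T in L^2(mu), i.e. f \<circ> T = f as elements of L^2.\<close>
definition U_fixed :: "'a measure \<Rightarrow> ('a \<Rightarrow> 'a) \<Rightarrow> ('a \<Rightarrow> complex) \<Rightarrow> bool" where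
  "U_fixed M T f \<longleftrightarrow> f \<in> L2 M \<and> (AE x in M. f (T x) = f x)"

text \<open>Ergodic: the fixed points of U form a one-dimensional subspace of L^2(mu)
  (elements of L^2 being a.e.-equivalence classes).\<close>
definition ergodic :: "'a measure \<Rightarrow> ('a \<Rightarrow> 'a) \<Rightarrow> bool" where
  "ergodic M T \<longleftrightarrow> mtds M T \<and>
     (\<exists>g. U_fixed M T g \<and> \<not> (AE x in M. g x = 0) \<and>
        (\<forall>f. U_fixed M T f \<longrightarrow> (\<exists>c. AE x in M. f x = c * g x)))"

definition rel_dense_nat :: "nat set \<Rightarrow> bool" where
  "rel_dense_nat E \<longleftrightarrow> (\<exists>n::nat. n \<ge> 1 \<and> (\<forall>j\<ge>1. E \<inter> {j..j+n-1} \<noteq> {}))"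

end

theory Submission
  imports Defs
begin


lemma mtds_eq:
  assumes "mtds M T" "S \<in> sets M"
  shows "measure M (T -` S \<inter> space M) = measure M S"
proof -
  interpret prob_space M using assms(1) by (simp add: mtds_def)
  have Tm: "T \<in> M \<rightarrow>\<^sub>M M" using assms(1) by (simp add: mtds_def)
  have le: "\<And>S. S \<in> sets M \<Longrightarrow> measure M (T -` S \<inter> space M) \<le> measure M S"
    using assms(1) by (simp add: mtds_def)
  have C: "space M - S \<in> sets M" using assms(2) by auto
  have eq: "T -` (space M - S) \<inter> space M = space M - (T -` S \<inter> space M)"
    using measurable_space[OF Tm] by auto
  have "measure M (T -` (space M - S) \<inter> space M) = 1 - measure M (T -` S \<inter> space M)"
    unfolding eq by (subst prob_compl) (auto intro: measurable_sets[OF Tm assms(2)])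
  moreover have "measure M (space M - S) = 1 - measure M S"
    using assms(2) prob_compl by auto
  ultimately have "measure M (T -` S \<inter> space M) \<ge> measure M S"
    using le[OF C] by linarith
  with le[OF assms(2)] show ?thesis by linarith
qed

lemma mtds_distr:
  assumes "mtds M T"
  shows "distr M M T = M"
proof -
  interpret prob_space M using assms(1) by (simp add: mtds_def)
  have Tm: "T \<in> M \<rightarrow>\<^sub>M M" using assms(1) by (simp add: mtds_def)
  show ?thesis
  proof (rule measure_eqI)
    fix S assume S: "S \<in> sets (distr M M T)"
    then have S': "S \<in> sets M" by simp
    have "emeasure (distr M M T) S = emeasure M (T -` S \<inter> space M)"
      using S' Tm by (simp add: emeasure_distr)
    also have "\<dots> = measure M (T -` S \<inter> space M)"
      using measurable_sets[OF Tm S'] by (simp add: emeasure_eq_measure)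
    also have "\<dots> = emeasure M S" using mtds_eq[OF assms S'] S' by (simp add: emeasure_eq_measure)
    finally show "emeasure (distr M M T) S = emeasure M S" .
  qed simp
qed

lemma funpow_meas:
  assumes "T \<in> M \<rightarrow>\<^sub>M M" shows "(T ^^ n) \<in> M \<rightarrow>\<^sub>M M"
  by (induction n) (auto intro: measurable_compose[OF _ assms])

lemma funpow_distr:
  assumes "T \<in> M \<rightarrow>\<^sub>M M" "distr M M T = M" shows "distr M M (T ^^ n) = M"
proof (induction n)
  case 0 then show ?case by (simp add: distr_id2)
next
  case (Suc n)
  have "distr M M (T ^^ Suc n) = distr M M (T \<circ> (T ^^ n))" by simp
  also have "\<dots> = distr (distr M M (T ^^ n)) M T"
    by (rule distr_distr[symmetric]) (auto intro: funpow_meas assms)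
  also have "\<dots> = M" using Suc assms by simp
  finally show ?case .
qed

lemma funpow_integral:
  fixes h :: "'a \<Rightarrow> real"
  assumes "T \<in> M \<rightarrow>\<^sub>M M" "distr M M T = M" "h \<in> borel_measurable M"
  shows "integral\<^sup>L M (\<lambda>x. h ((T ^^ n) x)) = integral\<^sup>L M h"
proof -
  have "integral\<^sup>L M (\<lambda>x. h ((T ^^ n) x)) = integral\<^sup>L (distr M M (T ^^ n)) h"
    by (rule integral_distr[symmetric]) (auto intro: funpow_meas assms)
  then show ?thesis using funpow_distr[OF assms(1,2)] by simp
qed

lemma ergodic_inv:
  assumes "ergodic M T" "D \<in> sets M" "\<And>x. x \<in> space M \<Longrightarrow> T x \<in> D \<longleftrightarrow> x \<in> D"
  shows "(AE x in M. x \<in> D) \<or> (AE x in M. x \<notin> D)"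
proof -
  interpret prob_space M using assms(1) by (simp add: ergodic_def mtds_def)
  obtain g where g: "\<And>f. U_fixed M T f \<Longrightarrow> \<exists>c. AE x in M. f x = c * g x"
    using assms(1) unfolding ergodic_def by blast
  have "U_fixed M T (\<lambda>x. 1)" unfolding U_fixed_def L2_def by auto
  then obtain c1 where c1: "AE x in M. 1 = c1 * g x" using g by blast
  have c1ne: "c1 \<noteq> 0"
  proof
    assume "c1 = 0" then have "AE x in M. False" using c1 by simp
    then show False using AE_False by simp
  qed
  have "U_fixed M T (\<lambda>x. complex_of_real (indicator D x))"
    unfolding U_fixed_def L2_def
  proof (intro conjI CollectI)
    show "(\<lambda>x. complex_of_real (indicator D x)) \<in> borel_measurable M" using assms(2) by measurable
    show "integrable M (\<lambda>x. (cmod (complex_of_real (indicator D x)))\<^sup>2)"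
      by (rule integrable_const_bound[where B=1]) (use assms(2) in \<open>auto simp: indicator_def\<close>)
    show "AE x in M. complex_of_real (indicator D (T x)) = complex_of_real (indicator D x)"
      using assms(3) by (auto simp: indicator_def)
  qed
  then obtain c2 where c2: "AE x in M. complex_of_real (indicator D x) = c2 * g x" using g by blast
  have AEd: "AE x in M. complex_of_real (indicator D x) = c2 / c1"
    using c1 c2 by eventually_elim (use c1ne in \<open>auto simp: field_simps\<close>)
  show ?thesis
  proof (cases "c2 / c1 = 1")
    case True
    have "AE x in M. x \<in> D" using AEd by eventually_elim (use True in \<open>auto simp: indicator_def split: if_splits\<close>)
    then show ?thesis by simp
  next
    case False
    have "AE x in M. x \<notin> D" using AEd by eventually_elim (use False in \<open>auto simp: indicator_def split: if_splits\<close>)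
    then show ?thesis by simp
  qed
qed


primrec mf :: "('a \<Rightarrow> real) \<Rightarrow> ('a \<Rightarrow> 'a) \<Rightarrow> nat \<Rightarrow> 'a \<Rightarrow> real" where
  "mf g T 0 x = 0"
| "mf g T (Suc n) x = max 0 (g x + mf g T n (T x))"

definition bs :: "('a \<Rightarrow> real) \<Rightarrow> ('a \<Rightarrow> 'a) \<Rightarrow> nat \<Rightarrow> 'a \<Rightarrow> real" where
  "bs g T n x = (\<Sum>k<n. g ((T ^^ k) x))"

lemma bs_Suc: "bs g T (Suc n) x = g x + bs g T n (T x)"
  unfolding bs_def sum.lessThan_Suc_shift by (simp add: funpow_Suc_right del: funpow.simps)

lemma bs_0[simp]: "bs g T 0 x = 0" by (simp add: bs_def)

lemma bs_le_mf: "bs g T n x \<le> mf g T n x"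
proof (induction n arbitrary: x)
  case 0 then show ?case by simp
next
  case (Suc n) then show ?case by (simp add: bs_Suc) (smt (verit) Suc)
qed

lemma mf_nonneg: "0 \<le> mf g T n x" by (cases n) auto

lemma mf_mono: "mf g T n x \<le> mf g T (Suc n) x"
proof (induction n arbitrary: x)
  case 0 then show ?case by simp
next
  case (Suc n)
  have "g x + mf g T n (T x) \<le> g x + mf g T (Suc n) (T x)" using Suc by simp
  then show ?case by (metis mf.simps(2) max.mono order_refl)
qed

lemma mf_meas:
  assumes "T \<in> M \<rightarrow>\<^sub>M M" "g \<in> borel_measurable M"
  shows "mf g T n \<in> borel_measurable M"
proof (induction n)
  case 0 then show ?case by simp
next
  case (Suc n)
  have "(\<lambda>x. mf g T n (T x)) \<in> borel_measurable M"
    using measurable_compose[OF assms(1) Suc] by simp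
  then show ?case using assms(2) by simp
qed

lemma bs_meas[measurable]:
  assumes "T \<in> M \<rightarrow>\<^sub>M M" "g \<in> borel_measurable M"
  shows "bs g T n \<in> borel_measurable M"
  unfolding bs_def
  by (intro borel_measurable_sum measurable_compose[OF funpow_meas[OF assms(1)] assms(2)])

lemma mf_bound:
  assumes "T \<in> M \<rightarrow>\<^sub>M M" "\<And>x. x \<in> space M \<Longrightarrow> \<bar>g x\<bar> \<le> K" "0 \<le> K"
  shows "x \<in> space M \<Longrightarrow> mf g T n x \<le> real n * K"
proof (induction n arbitrary: x)
  case 0 then show ?case by simp
next
  case (Suc n)
  have "T x \<in> space M" using measurable_space[OF assms(1) Suc.prems] .
  then have "mf g T n (T x) \<le> real n * K" using Suc.IH by blast
  moreover have "g x \<le> K" using assms(2)[OF Suc.prems] by simp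
  ultimately show ?case using assms(3) by (simp add: algebra_simps)
qed

lemma maximal:
  assumes pm: "prob_space M" and Tm: "T \<in> M \<rightarrow>\<^sub>M M" and dT: "distr M M T = M"
    and gm: "g \<in> borel_measurable M" and gb: "\<And>x. x \<in> space M \<Longrightarrow> \<bar>g x\<bar> \<le> K" and K: "0 \<le> K"
  shows "integral\<^sup>L M (\<lambda>x. indicator {x\<in>space M. mf g T (Suc n) x > 0} x * g x) \<ge> 0"
proof -
  interpret prob_space M by (rule pm)
  let ?F = "mf g T (Suc n)"
  let ?P = "{x\<in>space M. ?F x > 0}"
  have Fm: "?F \<in> borel_measurable M" by (rule mf_meas[OF Tm gm])
  have Pm: "?P \<in> sets M" using Fm by measurable
  have Fb: "0 \<le> ?F x \<and> ?F x \<le> real (Suc n) * K" if x: "x \<in> space M" for x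
    using mf_bound[where T=T and M=M and g=g and K=K and x=x and n="Suc n", OF Tm gb K x] mf_nonneg[of g T "Suc n" x] by linarith
  have Fi: "integrable M ?F"
    by (rule integrable_const_bound[where B="real (Suc n) * K"])
       (use Fb Fm in auto)
  have FTm: "(\<lambda>x. ?F (T x)) \<in> borel_measurable M" using measurable_compose[OF Tm Fm] by simp
  have FTi: "integrable M (\<lambda>x. ?F (T x))"
    by (rule integrable_const_bound[where B="real (Suc n) * K"])
       (use Fb measurable_space[OF Tm] FTm in auto)
  have gi: "integrable M (\<lambda>x. indicator ?P x * g x)"
    by (rule integrable_const_bound[where B="K"])
       (use gb Pm gm K in \<open>auto simp: indicator_def\<close>)
  have pw: "?F x - ?F (T x) \<le> indicator ?P x * g x" if x: "x \<in> space M" for x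
  proof (cases "x \<in> ?P")
    case True
    then have "?F x = g x + mf g T n (T x)" by auto
    moreover have "mf g T n (T x) \<le> ?F (T x)" by (rule mf_mono)
    ultimately show ?thesis using True by simp
  next
    case False
    then have "?F x = 0" using x mf_nonneg[of g T "Suc n" x] by auto
    then show ?thesis using False mf_nonneg[of g T "Suc n" "T x"] by simp
  qed
  have "integral\<^sup>L M (\<lambda>x. ?F x - ?F (T x)) \<le> integral\<^sup>L M (\<lambda>x. indicator ?P x * g x)"
    by (rule integral_mono[OF Bochner_Integration.integrable_diff[OF Fi FTi] gi pw])
  moreover have "integral\<^sup>L M (\<lambda>x. ?F x - ?F (T x)) = 0"
  proof -
    have "integral\<^sup>L M (\<lambda>x. ?F (T x)) = integral\<^sup>L M ?F"
      using funpow_integral[OF Tm dT Fm, of 1] by (simp del: mf.simps)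
    then show ?thesis using Bochner_Integration.integral_diff[OF Fi FTi] by (simp del: mf.simps)
  qed
  ultimately show ?thesis by simp
qed


lemma bounded_sums:
  assumes erg: "ergodic M T" and gm: "g \<in> borel_measurable M"
    and gb: "\<And>x. x \<in> space M \<Longrightarrow> \<bar>g x\<bar> \<le> K" and K: "0 \<le> K"
    and neg: "integral\<^sup>L M g < 0"
  shows "AE x in M. \<exists>m::nat. \<forall>n. bs g T n x \<le> real m"
proof -
  have mt: "mtds M T" using erg by (simp add: ergodic_def)
  have pm: "prob_space M" and Tm: "T \<in> M \<rightarrow>\<^sub>M M" using mt by (auto simp: mtds_def)
  have dT: "distr M M T = M" by (rule mtds_distr[OF mt])
  interpret prob_space M by (rule pm)
  have bsm[measurable]: "\<And>n. bs g T n \<in> borel_measurable M" by (rule bs_meas[OF Tm gm])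
  define D where "D = {x\<in>space M. \<forall>m::nat. \<exists>n. bs g T n x > real m}"
  have Dm: "D \<in> sets M" unfolding D_def by measurable
  have inv: "T x \<in> D \<longleftrightarrow> x \<in> D" if x: "x \<in> space M" for x
  proof -
    have Tx: "T x \<in> space M" using measurable_space[OF Tm x] .
    have gx: "\<bar>g x\<bar> \<le> K" using gb[OF x] .
    obtain c :: nat where c: "K \<le> real c" using real_arch_simple by blast
    show ?thesis
    proof
      assume TD: "T x \<in> D"
      show "x \<in> D" unfolding D_def
      proof (intro CollectI conjI allI x)
        fix m :: nat
        obtain n where "bs g T n (T x) > real (m + c)" using TD unfolding D_def by blast
        then have "bs g T (Suc n) x > real m" using gx c by (simp add: bs_Suc)
        then show "\<exists>n. bs g T n x > real m" by blast
      qed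
    next
      assume xD: "x \<in> D"
      show "T x \<in> D" unfolding D_def
      proof (intro CollectI conjI allI Tx)
        fix m :: nat
        obtain n where n: "bs g T n x > real (m + c)" using xD unfolding D_def by blast
        then have "n \<noteq> 0" by (cases n) auto
        then obtain k where k: "n = Suc k" by (cases n) auto
        have "bs g T k (T x) > real m" using n gx c unfolding k bs_Suc by simp
        then show "\<exists>n. bs g T n (T x) > real m" by blast
      qed
    qed
  qed
  have "AE x in M. x \<notin> D"
  proof -
    have "\<not> (AE x in M. x \<in> D)"
    proof
      assume AD: "AE x in M. x \<in> D"
      define E where "E n = {x\<in>space M. mf g T (Suc n) x > 0}" for n
      have Fm: "\<And>n. mf g T n \<in> borel_measurable M" by (rule mf_meas[OF Tm gm])
      have Em: "E n \<in> sets M" for n unfolding E_def using Fm by measurable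
      have inc: "incseq E"
        unfolding E_def
      proof (rule incseq_SucI, safe)
        fix n x assume "x \<in> space M" "0 < mf g T (Suc n) x"
        then show "0 < mf g T (Suc (Suc n)) x" using mf_mono[of g T "Suc n" x] by linarith
      qed
      have "AE x in M. x \<in> (\<Union>n. E n)"
        using AD AE_space
      proof eventually_elim
        case (elim x)
        then obtain n where n: "bs g T n x > real 0" unfolding D_def by blast
        then have "n \<noteq> 0" by (cases n) auto
        then obtain k where k: "n = Suc k" by (cases n) auto
        have "mf g T (Suc k) x > 0" using n bs_le_mf[of g T n x] k by simp
        then show ?case using elim unfolding E_def by blast
      qed
      then have p1: "prob (\<Union>n. E n) = 1" using prob_eq_1[of "\<Union>n. E n"] Em by blast
      have lim: "(\<lambda>n. prob (E n)) \<longlonglongrightarrow> 1"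
        using Lim_measure_incseq[of E M] Em inc p1 by (auto simp: emeasure_eq_measure)
      have lim2: "(\<lambda>n. - K * (1 - prob (E n))) \<longlonglongrightarrow> - K * (1 - 1)"
        by (intro tendsto_intros lim)
      have bnd: "- K * (1 - prob (E n)) \<le> integral\<^sup>L M g" for n
      proof -
        let ?I = "indicator (E n) :: 'a \<Rightarrow> real"
        have gi: "integrable M (\<lambda>x. ?I x * g x)"
          by (rule integrable_const_bound[where B="K"])
             (use gb Em gm K in \<open>auto simp: indicator_def\<close>)
        have gint: "integrable M g"
          by (rule integrable_const_bound[where B="K"]) (use gb gm in auto)
        have ii: "integrable M ?I" using Em by (simp add: integrable_indicator_iff emeasure_eq_measure)
        have i2: "integrable M (\<lambda>x. K * (1 - ?I x))"
          using ii by (intro integrable_mult_right Bochner_Integration.integrable_diff) auto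
        have "integral\<^sup>L M (\<lambda>x. ?I x * g x - K * (1 - ?I x)) \<le> integral\<^sup>L M g"
          by (rule integral_mono[OF Bochner_Integration.integrable_diff[OF gi i2] gint])
             (use gb in \<open>auto simp: indicator_def abs_le_iff dest!: gb\<close>)
        moreover have "integral\<^sup>L M (\<lambda>x. ?I x * g x - K * (1 - ?I x))
            = integral\<^sup>L M (\<lambda>x. ?I x * g x) - K * (1 - prob (E n))"
        proof -
          have "integral\<^sup>L M (\<lambda>x. 1 - ?I x) = 1 - prob (E n)"
            using ii Em by (subst Bochner_Integration.integral_diff) (auto simp: prob_space)
          then show ?thesis
            using Bochner_Integration.integral_diff[OF gi i2] by simp
        qed
        moreover have "integral\<^sup>L M (\<lambda>x. ?I x * g x) \<ge> 0"
          using maximal[OF pm Tm dT gm gb K, of n] unfolding E_def by simp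
        ultimately show ?thesis by linarith
      qed
      have "- K * (1 - 1) \<le> integral\<^sup>L M g"
        by (rule LIMSEQ_le_const2[OF lim2]) (use bnd in auto)
      then show False using neg by simp
    qed
    then show ?thesis using ergodic_inv[OF erg Dm inv] by blast
  qed
  then show ?thesis using AE_space
  proof eventually_elim
    case (elim x)
    then show ?case unfolding D_def by (auto simp: not_less)
  qed
qed


lemma bs_shift: "bs (\<lambda>x. f x - a) T n x = bs f T n x - real n * a"
  unfolding bs_def by (simp add: sum_subtractf)

lemma bs_shift2: "bs (\<lambda>x. a - f x) T n x = real n * a - bs f T n x"
  unfolding bs_def by (simp add: sum_subtractf)

lemma conv_lemma:
  fixes s :: "nat \<Rightarrow> real"
  assumes "\<And>j::nat. \<exists>m::nat. \<forall>n. \<bar>s n - real n * c\<bar> \<le> real n / real (Suc j) + real m"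
  shows "(\<lambda>n. s n / real n) \<longlonglongrightarrow> c"
proof (rule LIMSEQ_I)
  fix r :: real assume r: "0 < r"
  obtain j :: nat where j: "1 / real (Suc j) < r / 2"
    using reals_Archimedean[of "r/2"] r by (auto simp: inverse_eq_divide)
  obtain m :: nat where m: "\<And>n. \<bar>s n - real n * c\<bar> \<le> real n / real (Suc j) + real m"
    using assms by blast
  obtain N :: nat where N: "2 * real m / r < real N" using reals_Archimedean2 by blast
  show "\<exists>no. \<forall>n\<ge>no. norm (s n / real n - c) < r"
  proof (intro exI allI impI)
    fix n assume n: "Suc N \<le> n"
    then have npos: "real n > 0" by simp
    have e1: "s n / real n - c = (s n - real n * c) / real n" using npos by (simp add: diff_divide_distrib)
    have "norm (s n / real n - c) = \<bar>s n - real n * c\<bar> / real n"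
      unfolding e1 real_norm_def abs_divide using npos by simp
    also have "\<dots> \<le> (real n / real (Suc j) + real m) / real n"
      by (rule divide_right_mono[OF m[of n]]) (use npos in simp)
    also have "\<dots> = 1 / real (Suc j) + real m / real n" using npos by (simp add: add_divide_distrib)
    also have "\<dots> < r / 2 + r / 2"
    proof -
      have "real m / real n < r / 2"
      proof -
        have "2 * real m < r * real N" using N r by (simp add: field_simps)
        also have "\<dots> \<le> r * real n" using n r by simp
        finally show ?thesis using npos by (simp add: field_simps)
      qed
      then show ?thesis using j by linarith
    qed
    finally show "norm (s n / real n - c) < r" by simp
  qed
qed



theorem corollary5p1:
  fixes M :: "'a measure" and T :: "'a \<Rightarrow> 'a" and A B :: "'a set" and \<epsilon> :: real
  assumes "ergodic M T"
    and "A \<in> sets M" and "B \<in> sets M"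
    and "\<epsilon> > 0"
  shows "rel_dense_nat {k::nat. k \<ge> 1 \<and>
           measure M (A \<inter> ((T ^^ k) -` B \<inter> space M)) > measure M A * measure M B - \<epsilon>}"
proof -
  note erg = assms(1) and Am = assms(2) and Bm = assms(3) and eps = assms(4)
  have mt: "mtds M T" using erg by (simp add: ergodic_def)
  have pm: "prob_space M" and Tm: "T \<in> M \<rightarrow>\<^sub>M M" using mt by (auto simp: mtds_def)
  have dT: "distr M M T = M" by (rule mtds_distr[OF mt])
  interpret prob_space M by (rule pm)
  define f :: "'a \<Rightarrow> real" where "f = indicator B"
  define c where "c = prob B"
  have fm[measurable]: "f \<in> borel_measurable M" unfolding f_def using Bm by measurable
  have c01: "0 \<le> c" "c \<le> 1" unfolding c_def by auto
  define S where "S n x = bs f T n x" for n x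
  have Sm[measurable]: "S n \<in> borel_measurable M" for n unfolding S_def by (rule bs_meas[OF Tm fm])
  have S01: "0 \<le> S n x \<and> S n x \<le> real n" for n x
  proof -
    have "S n x \<le> real (card {..<n}) * 1"
      unfolding S_def bs_def by (rule sum_bounded_above) (simp add: f_def indicator_def)
    moreover have "0 \<le> S n x" unfolding S_def bs_def by (rule sum_nonneg) (simp add: f_def)
    ultimately show ?thesis by simp
  qed
  have fb: "\<bar>f x\<bar> \<le> 1" for x by (simp add: f_def indicator_def)
  have intf: "integral\<^sup>L M f = c" unfolding f_def c_def using Bm by simp
  have upper: "AE x in M. \<exists>m::nat. \<forall>n. bs (\<lambda>x. f x - (c + d)) T n x \<le> real m" if d: "d > 0" for d
  proof (rule bounded_sums[OF erg, where K="2 + d"])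
    show "(\<lambda>x. f x - (c + d)) \<in> borel_measurable M" by measurable
    show "\<bar>f x - (c + d)\<bar> \<le> 2 + d" for x using fb[of x] c01 d by (auto simp: abs_le_iff)
    show "0 \<le> 2 + d" using d by simp
    have "integral\<^sup>L M (\<lambda>x. f x - (c + d)) = c - (c + d)"
      using intf by (subst Bochner_Integration.integral_diff) (auto intro: integrable_const_bound[where B=1] simp: fb prob_space)
    then show "integral\<^sup>L M (\<lambda>x. f x - (c + d)) < 0" using d by simp
  qed
  have lower: "AE x in M. \<exists>m::nat. \<forall>n. bs (\<lambda>x. (c - d) - f x) T n x \<le> real m" if d: "d > 0" for d
  proof (rule bounded_sums[OF erg, where K="2 + d"])
    show "(\<lambda>x. (c - d) - f x) \<in> borel_measurable M" by measurable
    show "\<bar>(c - d) - f x\<bar> \<le> 2 + d" for x using fb[of x] c01 d by (auto simp: abs_le_iff)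
    show "0 \<le> 2 + d" using d by simp
    have "integral\<^sup>L M (\<lambda>x. (c - d) - f x) = (c - d) - c"
      using intf by (subst Bochner_Integration.integral_diff) (auto intro: integrable_const_bound[where B=1] simp: fb prob_space)
    then show "integral\<^sup>L M (\<lambda>x. (c - d) - f x) < 0" using d by simp
  qed
  have "AE x in M. \<forall>j::nat. (\<exists>m::nat. \<forall>n. bs (\<lambda>x. f x - (c + 1 / real (Suc j))) T n x \<le> real m)
     \<and> (\<exists>m::nat. \<forall>n. bs (\<lambda>x. (c - 1 / real (Suc j)) - f x) T n x \<le> real m)"
    unfolding AE_all_countable using upper lower by (auto intro: AE_conjI)
  then have conv: "AE x in M. (\<lambda>n. S n x / real n) \<longlonglongrightarrow> c"
  proof eventually_elim
    case (elim x)
    show ?case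
    proof (rule conv_lemma)
      fix j :: nat
      obtain m1 :: nat where m1: "\<And>n. bs (\<lambda>x. f x - (c + 1 / real (Suc j))) T n x \<le> real m1"
        using elim by blast
      obtain m2 :: nat where m2: "\<And>n. bs (\<lambda>x. (c - 1 / real (Suc j)) - f x) T n x \<le> real m2"
        using elim by blast
      show "\<exists>m::nat. \<forall>n. \<bar>S n x - real n * c\<bar> \<le> real n / real (Suc j) + real m"
      proof (intro exI allI)
        fix n
        have a: "S n x - real n * (c + 1 / real (Suc j)) \<le> real m1"
          using m1[of n] unfolding bs_shift S_def .
        have b: "real n * (c - 1 / real (Suc j)) - S n x \<le> real m2"
          using m2[of n] unfolding bs_shift2 S_def .
        show "\<bar>S n x - real n * c\<bar> \<le> real n / real (Suc j) + real (m1 + m2)"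
          using a b by (simp add: algebra_simps abs_le_iff)
      qed
    qed
  qed
  have L1: "(\<lambda>n. integral\<^sup>L M (\<lambda>x. \<bar>S n x / real n - c\<bar>)) \<longlonglongrightarrow> integral\<^sup>L M (\<lambda>x. 0 :: real)"
  proof (rule integral_dominated_convergence[where w="\<lambda>x. 1"])
    show "(\<lambda>x. 0::real) \<in> borel_measurable M" by simp
    show "(\<lambda>x. \<bar>S n x / real n - c\<bar>) \<in> borel_measurable M" for n by measurable
    show "integrable M (\<lambda>x. 1::real)" by simp
    show "AE x in M. (\<lambda>n. \<bar>S n x / real n - c\<bar>) \<longlonglongrightarrow> 0" using conv
    proof eventually_elim
      case (elim x)
      have "(\<lambda>n. S n x / real n - c) \<longlonglongrightarrow> 0" using elim by (simp add: LIM_zero)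
      then show ?case using tendsto_rabs_zero by blast
    qed
    show "AE x in M. norm \<bar>S n x / real n - c\<bar> \<le> 1" for n
    proof (rule AE_I2)
      fix x
      have "0 \<le> S n x / real n" using S01[of n x] by simp
      moreover have "S n x / real n \<le> 1"
        using S01[of n x] by (cases "n = 0") (auto simp: divide_le_eq)
      ultimately show "norm \<bar>S n x / real n - c\<bar> \<le> 1" using c01 by auto
    qed
  qed
  then obtain N0 where N0: "\<And>n. n \<ge> N0 \<Longrightarrow> integral\<^sup>L M (\<lambda>x. \<bar>S n x / real n - c\<bar>) < \<epsilon>"
    using eps by (auto simp: LIMSEQ_iff)
  define N where "N = Suc N0"
  have Npos: "N \<ge> 1" and NL: "integral\<^sup>L M (\<lambda>x. \<bar>S N x / real N - c\<bar>) < \<epsilon>"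
    using N0[of N] by (auto simp: N_def)
  show ?thesis
    unfolding rel_dense_nat_def
  proof (intro exI conjI allI impI)
    show "1 \<le> N" by (rule Npos)
    fix j :: nat assume j: "1 \<le> j"
    have bint: "integrable M h" if "h \<in> borel_measurable M" "\<And>x. x \<in> space M \<Longrightarrow> \<bar>h x\<bar> \<le> K"
      for h :: "'a \<Rightarrow> real" and K
      by (rule integrable_const_bound[where B=K]) (use that in auto)
    have Tjm: "(T ^^ k) \<in> M \<rightarrow>\<^sub>M M" for k by (rule funpow_meas[OF Tm])
    define P where "P k = measure M (A \<inter> ((T ^^ k) -` B \<inter> space M))" for k
    have Pint: "P k = integral\<^sup>L M (\<lambda>x. indicator A x * f ((T ^^ k) x))" for k
    proof -
      have sub: "A \<inter> ((T ^^ k) -` B \<inter> space M) \<subseteq> space M" by auto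
      have "integral\<^sup>L M (indicator (A \<inter> ((T ^^ k) -` B \<inter> space M)) :: 'a \<Rightarrow> real) = P k"
        unfolding P_def using sub by (simp add: Int_absorb2)
      moreover have "indicator (A \<inter> ((T ^^ k) -` B \<inter> space M)) x = indicator A x * f ((T ^^ k) x)"
        if "x \<in> space M" for x
        using that by (simp add: f_def indicator_def)
      ultimately show ?thesis
        by (metis (no_types, lifting) Bochner_Integration.integral_cong)
    qed
    have fTm: "(\<lambda>x. indicator A x * f ((T ^^ k) x)) \<in> borel_measurable M" for k
      using measurable_compose[OF Tjm fm] Am by measurable
    have fTi: "integrable M (\<lambda>x. indicator A x * f ((T ^^ k) x))" for k
      by (rule bint[of _ 1, OF fTm]) (simp add: f_def indicator_def)
    have sumeq: "(\<Sum>i<N. P (j + i)) = integral\<^sup>L M (\<lambda>x. indicator A x * S N ((T ^^ j) x))"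
    proof -
      have "(\<Sum>i<N. P (j + i)) = integral\<^sup>L M (\<lambda>x. \<Sum>i<N. indicator A x * f ((T ^^ (j + i)) x))"
        unfolding Pint by (rule Bochner_Integration.integral_sum[symmetric]) (rule fTi)
      also have "\<dots> = integral\<^sup>L M (\<lambda>x. indicator A x * S N ((T ^^ j) x))"
      proof (rule Bochner_Integration.integral_cong[OF refl])
        fix x
        have "(T ^^ (j + i)) x = (T ^^ i) ((T ^^ j) x)" for i
          by (simp add: funpow_add add.commute)
        then show "(\<Sum>i<N. indicator A x * f ((T ^^ (j + i)) x)) = indicator A x * S N ((T ^^ j) x)"
          unfolding S_def bs_def by (simp add: sum_distrib_left)
      qed
      finally show ?thesis .
    qed
    define h where "h x = S N x / real N" for x
    have hm: "h \<in> borel_measurable M" unfolding h_def by measurable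
    have hTm: "(\<lambda>x. h ((T ^^ j) x)) \<in> borel_measurable M" using measurable_compose[OF Tjm hm] by simp
    have h01: "0 \<le> h x \<and> h x \<le> 1" for x
      using S01[of N x] Npos unfolding h_def by (auto simp: divide_le_eq)
    have e1: "integral\<^sup>L M (\<lambda>x. \<bar>h ((T ^^ j) x) - c\<bar>) = integral\<^sup>L M (\<lambda>x. \<bar>h x - c\<bar>)"
      by (rule funpow_integral[OF Tm dT]) (use hm in measurable)
    have i1: "integrable M (\<lambda>x. indicator A x * h ((T ^^ j) x))"
      by (rule bint[of _ 1]) (use hTm Am h01 in \<open>auto simp: indicator_def abs_le_iff\<close>)
    have i2: "integrable M (\<lambda>x. \<bar>h ((T ^^ j) x) - c\<bar>)"
    proof (rule bint[of _ 2])
      show "(\<lambda>x. \<bar>h ((T ^^ j) x) - c\<bar>) \<in> borel_measurable M" using hTm by measurable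
      fix x show "\<bar>\<bar>h ((T ^^ j) x) - c\<bar>\<bar> \<le> 2" using h01[of "(T ^^ j) x"] c01 by (simp add: abs_le_iff)
    qed
    have i3: "integrable M (\<lambda>x. indicator A x * c)"
      using Am by (intro integrable_mult_left) (simp add: integrable_indicator_iff emeasure_eq_measure)
    have "integral\<^sup>L M (\<lambda>x. indicator A x * c - \<bar>h ((T ^^ j) x) - c\<bar>)
        \<le> integral\<^sup>L M (\<lambda>x. indicator A x * h ((T ^^ j) x))"
    proof (rule integral_mono[OF Bochner_Integration.integrable_diff[OF i3 i2] i1])
      fix x
      show "indicator A x * c - \<bar>h ((T ^^ j) x) - c\<bar> \<le> indicator A x * h ((T ^^ j) x)"
        by (auto simp: indicator_def abs_le_iff)
    qed
    moreover have "integral\<^sup>L M (\<lambda>x. indicator A x * c - \<bar>h ((T ^^ j) x) - c\<bar>)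
        = prob A * c - integral\<^sup>L M (\<lambda>x. \<bar>h x - c\<bar>)"
      using Bochner_Integration.integral_diff[OF i3 i2] e1 Am by simp
    moreover have "integral\<^sup>L M (\<lambda>x. \<bar>h x - c\<bar>) < \<epsilon>" using NL unfolding h_def .
    ultimately have gt: "integral\<^sup>L M (\<lambda>x. indicator A x * h ((T ^^ j) x)) > prob A * c - \<epsilon>" by linarith
    have "integral\<^sup>L M (\<lambda>x. indicator A x * S N ((T ^^ j) x))
        = real N * integral\<^sup>L M (\<lambda>x. indicator A x * h ((T ^^ j) x))"
    proof -
      have "integral\<^sup>L M (\<lambda>x. indicator A x * S N ((T ^^ j) x))
          = integral\<^sup>L M (\<lambda>x. real N * (indicator A x * h ((T ^^ j) x)))"
        using Npos by (intro Bochner_Integration.integral_cong) (auto simp: h_def)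
      then show ?thesis by simp
    qed
    then have sumgt: "(\<Sum>i<N. P (j + i)) > real N * (prob A * c - \<epsilon>)"
      using sumeq gt Npos by simp
    show "{k. 1 \<le> k \<and> measure M A * measure M B - \<epsilon> < measure M (A \<inter> ((T ^^ k) -` B \<inter> space M))}
          \<inter> {j..j + N - 1} \<noteq> {}"
    proof
      assume empty: "{k. 1 \<le> k \<and> measure M A * measure M B - \<epsilon> < measure M (A \<inter> ((T ^^ k) -` B \<inter> space M))}
          \<inter> {j..j + N - 1} = {}"
      have "P (j + i) \<le> prob A * c - \<epsilon>" if i: "i \<in> {..<N}" for i
      proof -
        have "j + i \<in> {j..j + N - 1}" using i by auto
        then have "j + i \<notin> {k. 1 \<le> k \<and> measure M A * measure M B - \<epsilon> < measure M (A \<inter> ((T ^^ k) -` B \<inter> space M))}"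
          using empty by blast
        then show ?thesis using j unfolding P_def c_def by auto
      qed
      then have "(\<Sum>i<N. P (j + i)) \<le> real (card {..<N}) * (prob A * c - \<epsilon>)"
        by (rule sum_bounded_above)
      then show False using sumgt by simp
    qed
  qed
qed

end
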